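(* Every nonzero proper ideal $\mathcal I$ of $C_{an}(S^1;\mathbf{R})$ is of the form $\mathfrak m_{p_1}^{a_1}\mathfrak m_{p_2}^{a_2}\cdots\mathfrak m_{p_n}^{a_n}$ for some points $p_1,\dots,p_n\in S^1$ and positive integers $a_1,\dots,a_n$. Specifically, $p_1,\dots,p_n$ are the common zeros of the elements of $\mathcal I$ and $a_k$ is the minimum, over nonzero $f\in\mathcal I$, of the order of vanishing of $f$ at $p_k$.
   Context: $S^1$ is identified with $\mathbf{R}/2\pi\mathbf{Z}$. $C_{an}(S^1;\mathbf{R})$ is the ring (under pointwise operations) of real-valued real-analytic functions on $S^1$, i.e. $2\pi$-periodic real-analytic functions $\mathbf{R}\to\mathbf{R}$. For $p\in S^1$, $\mathfrak m_p=\{f\in C_{an}(S^1;\mathbf{R}): f(p)=0\}$. *)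

theory Defs
  imports "HOL-Analysis.Analysis" "HOL-Algebra.Ideal_Product"
begin

definition real_analytic_at :: "(real \<Rightarrow> real) \<Rightarrow> real \<Rightarrow> bool" where
  "real_analytic_at f x \<longleftrightarrow>
     (\<exists>r>0. \<exists>c::nat \<Rightarrow> real. \<forall>y. \<bar>y - x\<bar> < r \<longrightarrow> (\<lambda>n. c n * (y - x) ^ n) sums f y)"

text \<open>C_an(S^1;R): 2pi-periodic real-analytic functions R -> R.\<close>
definition Can :: "(real \<Rightarrow> real) set" where
  "Can = {f. (\<forall>x. f (x + 2 * pi) = f x) \<and> (\<forall>x. real_analytic_at f x)}"

definition Can_ring :: "(real \<Rightarrow> real) ring" where
  "Can_ring = \<lparr> carrier = Can, monoid.mult = (\<lambda>f g x. f x * g x), one = (\<lambda>x. 1),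
                zero = (\<lambda>x. 0), add = (\<lambda>f g x. f x + g x) \<rparr>"

text \<open>Points of S^1 = R/2piZ are represented by their representatives in [0, 2pi).\<close>
definition S1 :: "real set" where
  "S1 = {0..<2 * pi}"

definition max_ideal_at :: "real \<Rightarrow> (real \<Rightarrow> real) set" where
  "max_ideal_at p = {f \<in> Can. f p = 0}"

definition vanishing_order :: "(real \<Rightarrow> real) \<Rightarrow> real \<Rightarrow> nat" where
  "vanishing_order f p = (LEAST n. (deriv ^^ n) f p \<noteq> 0)"

end

theory Submission
  imports Defs "HOL-Complex_Analysis.Complex_Analysis"
begin

lemma ra_series:
  assumes "real_analytic_at f p"
  obtains r c where "r > 0" "\<And>y. \<bar>y - p\<bar> < r \<Longrightarrow> (\<lambda>n. c n * (y - p) ^ n) sums f y"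
  using assms unfolding real_analytic_at_def by blast

lemma ra_local:
  assumes "real_analytic_at g p" "eventually (\<lambda>y. f y = g y) (nhds p)"
  shows "real_analytic_at f p"
proof -
  obtain r c where r: "r>0" and s: "\<And>y. \<bar>y - p\<bar> < r \<Longrightarrow> (\<lambda>n. c n * (y - p) ^ n) sums g y"
    using assms(1) unfolding real_analytic_at_def by blast
  obtain d where d: "d>0" "\<And>y. dist y p < d \<Longrightarrow> f y = g y"
    using assms(2) unfolding eventually_nhds_metric by blast
  have "\<forall>y. \<bar>y - p\<bar> < min r d \<longrightarrow> (\<lambda>n. c n * (y - p) ^ n) sums f y"
    using s d by (auto simp: dist_real_def)
  then show ?thesis unfolding real_analytic_at_def using r d(1) by (metis min_less_iff_conj)
qed

lemma powser_shift_deriv: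
  fixes c :: "nat \<Rightarrow> 'a::{real_normed_field,banach}"
  assumes r: "\<And>w. norm w < r \<Longrightarrow> summable (\<lambda>n. c n * w ^ n)" and y: "norm (y - p) < r"
  shows "((\<lambda>y. \<Sum>n. c n * (y - p) ^ n) has_field_derivative (\<Sum>n. diffs c n * (y - p) ^ n)) (at y)"
proof -
  have "((\<lambda>z. \<Sum>n. c n * z^n) has_field_derivative (\<Sum>n. diffs c n * (y-p)^n)) (at (y - p))"
    by (rule termdiffs_strong'[OF r y])
  moreover have "((\<lambda>y. y - p) has_field_derivative 1) (at y)"
    by (auto intro!: derivative_eq_intros)
  ultimately show ?thesis using DERIV_chain2 by fastforce
qed

lemma powser_fun_deriv:
  fixes d :: "nat \<Rightarrow> real"
  assumes r: "r > 0" and s: "\<And>y. \<bar>y - p\<bar> < r \<Longrightarrow> (\<lambda>n. d n * (y - p) ^ n) sums g y"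
    and y: "\<bar>y - p\<bar> < r"
  shows "(g has_field_derivative (\<Sum>n. diffs d n * (y - p) ^ n)) (at y)"
    and "summable (\<lambda>n. diffs d n * (y - p) ^ n)"
proof -
  have sm: "summable (\<lambda>n. d n * w ^ n)" if "norm w < r" for w
    using s[of "p + w"] that by (auto simp: sums_iff)
  have "((\<lambda>y. \<Sum>n. d n * (y - p) ^ n) has_field_derivative (\<Sum>n. diffs d n * (y - p) ^ n)) (at y)"
    by (rule powser_shift_deriv[OF sm]) (use y in auto)
  then show "(g has_field_derivative (\<Sum>n. diffs d n * (y - p) ^ n)) (at y)"
  proof (rule has_field_derivative_transform_within_open)
    show "open (ball p r)" by simp
    show "y \<in> ball p r" unfolding mem_ball dist_real_def using y by arith
    fix x assume "x \<in> ball p r"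
    then have "\<bar>x - p\<bar> < r" unfolding mem_ball dist_real_def by arith
    then show "(\<Sum>n. d n * (x - p) ^ n) = g x" using s sums_unique by metis
  qed
  show "summable (\<lambda>n. diffs d n * (y - p) ^ n)"
    by (rule termdiff_converges[of _ r]) (use y sm in auto)
qed

lemma diffs_iter: "(diffs ^^ n) c k * fact k = fact (k + n) * (c (k + n) :: real)"
proof (induction n arbitrary: k)
  case 0 then show ?case by simp
next
  case (Suc n)
  have e1: "(diffs ^^ Suc n) c k = of_nat (Suc k) * (diffs ^^ n) c (Suc k)" by (simp add: diffs_def)
  have e2: "fact (Suc k) = (of_nat (Suc k) * fact k :: real)" by (rule fact_Suc)
  have "(diffs ^^ Suc n) c k * fact k = (diffs ^^ n) c (Suc k) * fact (Suc k)"
    unfolding e1 e2 by (simp only: mult_ac)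
  then show ?case using Suc.IH[of "Suc k"] by simp
qed

lemma ra_derivs_sums:
  fixes f :: "real \<Rightarrow> real"
  assumes r: "r > 0" and s: "\<And>y. \<bar>y - p\<bar> < r \<Longrightarrow> (\<lambda>n. c n * (y - p) ^ n) sums f y"
  shows "\<forall>y. \<bar>y - p\<bar> < r \<longrightarrow> (\<lambda>k. (diffs ^^ n) c k * (y - p) ^ k) sums (deriv ^^ n) f y"
proof (induction n)
  case 0 show ?case using s by simp
next
  case (Suc n)
  show ?case
  proof (intro allI impI)
    fix y assume y: "\<bar>y - p\<bar> < r"
    have s': "\<And>y. \<bar>y - p\<bar> < r \<Longrightarrow> (\<lambda>k. (diffs ^^ n) c k * (y - p) ^ k) sums (deriv ^^ n) f y"
      using Suc by blast
    note D = powser_fun_deriv[OF r s' y]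
    have "deriv ((deriv ^^ n) f) y = (\<Sum>k. diffs ((diffs ^^ n) c) k * (y - p) ^ k)"
      using D(1) by (rule DERIV_imp_deriv)
    then show "(\<lambda>k. (diffs ^^ Suc n) c k * (y - p) ^ k) sums (deriv ^^ Suc n) f y"
      using summable_sums[OF D(2)] by simp
  qed
qed

lemma ra_derivs_coeff:
  fixes f :: "real \<Rightarrow> real"
  assumes r: "r > 0" and s: "\<And>y. \<bar>y - p\<bar> < r \<Longrightarrow> (\<lambda>n. c n * (y - p) ^ n) sums f y"
  shows "(deriv ^^ n) f p = fact n * c n"
proof -
  have "(diffs ^^ n) c 0 = (deriv ^^ n) f p"
    using ra_derivs_sums[OF r s, rule_format, of p n] r by simp
  then have "(deriv ^^ n) f p = (diffs ^^ n) c 0" by simp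
  also have "\<dots> = fact n * c n" using diffs_iter[of n c 0] by simp
  finally show ?thesis .
qed

lemma ra_DERIV:
  assumes "real_analytic_at f p"
  shows "\<exists>D. (f has_field_derivative D) (at p)"
proof -
  obtain r c where r: "r>0" and s: "\<And>y. \<bar>y - p\<bar> < r \<Longrightarrow> (\<lambda>n. c n * (y - p) ^ n) sums f y"
    using assms unfolding real_analytic_at_def by blast
  show ?thesis using powser_fun_deriv(1)[OF r s, of p] r by auto
qed

lemma ra_isCont: "real_analytic_at f p \<Longrightarrow> isCont f p"
  using ra_DERIV DERIV_isCont by blast

lemma ra_complex:
  assumes "real_analytic_at f p"
  obtains r G where "r > 0" "G holomorphic_on ball (complex_of_real p) r"
    "\<And>y. \<bar>y - p\<bar> < r \<Longrightarrow> G (of_real y) = of_real (f y)"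
proof -
  obtain r c where r: "r>0" and s: "\<And>y. \<bar>y - p\<bar> < r \<Longrightarrow> (\<lambda>n. c n * (y - p) ^ n) sums f y"
    using assms unfolding real_analytic_at_def by blast
  define C where "C n = complex_of_real (c n)" for n
  define G where "G z = (\<Sum>n. C n * (z - of_real p) ^ n)" for z
  have summ: "summable (\<lambda>n. C n * w ^ n)" if "norm w < r" for w
  proof -
    define t where "t = (norm w + r) / 2"
    have t: "norm w < t" "t < r" using that by (auto simp: t_def)
    have t0: "0 \<le> t" using norm_ge_zero[of w] t(1) by linarith
    have "(\<lambda>n. c n * t ^ n) sums f (p + t)" using s[of "p + t"] t(2) t0 by simp
    then have "summable (\<lambda>n. c n * t ^ n)" by (rule sums_summable)
    then have "summable (\<lambda>n. complex_of_real (c n * t ^ n))" by (subst summable_complex_of_real)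
    then have "summable (\<lambda>n. C n * (of_real t) ^ n)" by (simp add: C_def)
    then have "summable (\<lambda>n. norm (C n * w ^ n))" by (rule powser_insidea) (use t in auto)
    then show ?thesis by (rule summable_norm_cancel)
  qed
  have Ghol: "G holomorphic_on ball (of_real p) r"
  proof (subst holomorphic_on_open, simp, intro ballI exI)
    fix z assume "z \<in> ball (complex_of_real p) r"
    then have nz: "norm (z - of_real p) < r" by (simp add: dist_norm norm_minus_commute)
    have GG: "G = (\<lambda>z. \<Sum>n. C n * (z - of_real p) ^ n)" by (simp add: G_def fun_eq_iff)
    show "(G has_field_derivative (\<Sum>n. diffs C n * (z - of_real p) ^ n)) (at z)"
      unfolding GG using powser_shift_deriv[of r C z "of_real p", OF summ nz] by simp
  qed
  moreover have Geq: "G (of_real y) = of_real (f y)" if "\<bar>y - p\<bar> < r" for y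
  proof -
    have "(\<lambda>n. complex_of_real (c n * (y - p) ^ n)) sums of_real (f y)"
      by (rule sums_of_real[OF s[OF that]])
    then have "(\<lambda>n. C n * (of_real y - of_real p) ^ n) sums of_real (f y)"
      by (simp add: C_def)
    then show ?thesis by (simp add: G_def sums_iff)
  qed
  show ?thesis by (rule that[OF r Ghol Geq])
qed

lemma complex_ra:
  assumes "r > 0" "G holomorphic_on ball (complex_of_real p) r"
    "\<And>y. \<bar>y - p\<bar> < r \<Longrightarrow> Re (G (of_real y)) = f y"
  shows "real_analytic_at f p"
proof -
  define a where "a n = (deriv ^^ n) G (of_real p) / fact n" for n
  have S: "(\<lambda>n. Re (a n) * (y - p) ^ n) sums f y" if "\<bar>y - p\<bar> < r" for y
  proof -
    have "of_real y \<in> ball (complex_of_real p) r" using that by (simp add: dist_real_def)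
    from holomorphic_power_series[OF assms(2) this]
    have "(\<lambda>n. a n * (of_real y - of_real p) ^ n) sums G (of_real y)" by (simp add: a_def)
    from sums_Re[OF this] have "(\<lambda>n. Re (a n * (of_real y - of_real p)^n)) sums Re (G (of_real y))" .
    moreover have "Re (a n * (of_real y - of_real p)^n) = Re (a n) * (y-p)^n" for n
    proof -
      have "(complex_of_real y - of_real p)^n = of_real ((y - p)^n)" by simp
      then show ?thesis by simp
    qed
    ultimately show ?thesis using assms(3) that by simp
  qed
  show ?thesis unfolding real_analytic_at_def
    by (rule exI[of _ r], intro conjI exI[of _ "\<lambda>n. Re (a n)"] allI impI assms(1) S)
qed

lemma ra_add:
  assumes f: "real_analytic_at f p" and g: "real_analytic_at g p"
  shows "real_analytic_at (\<lambda>x. f x + g x) p"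
proof -
  obtain r1 G1 where r1: "r1 > 0" and h1: "G1 holomorphic_on ball (complex_of_real p) r1"
    and e1: "\<And>y. \<bar>y - p\<bar> < r1 \<Longrightarrow> G1 (of_real y) = of_real (f y)" using ra_complex[OF f] by blast
  obtain r2 G2 where r2: "r2 > 0" and h2: "G2 holomorphic_on ball (complex_of_real p) r2"
    and e2: "\<And>y. \<bar>y - p\<bar> < r2 \<Longrightarrow> G2 (of_real y) = of_real (g y)" using ra_complex[OF g] by blast
  show ?thesis
  proof (rule complex_ra[of "min r1 r2" "\<lambda>z. G1 z + G2 z"])
    show "0 < min r1 r2" using r1 r2 by simp
    show "(\<lambda>z. G1 z + G2 z) holomorphic_on ball (complex_of_real p) (min r1 r2)"
      by (intro holomorphic_intros holomorphic_on_subset[OF h1] holomorphic_on_subset[OF h2]) auto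
    fix y assume "\<bar>y - p\<bar> < min r1 r2"
    then show "Re (G1 (of_real y) + G2 (of_real y)) = f y + g y" using e1 e2 by simp
  qed
qed

lemma ra_mult:
  assumes f: "real_analytic_at f p" and g: "real_analytic_at g p"
  shows "real_analytic_at (\<lambda>x. f x * g x) p"
proof -
  obtain r1 G1 where r1: "r1 > 0" and h1: "G1 holomorphic_on ball (complex_of_real p) r1"
    and e1: "\<And>y. \<bar>y - p\<bar> < r1 \<Longrightarrow> G1 (of_real y) = of_real (f y)" using ra_complex[OF f] by blast
  obtain r2 G2 where r2: "r2 > 0" and h2: "G2 holomorphic_on ball (complex_of_real p) r2"
    and e2: "\<And>y. \<bar>y - p\<bar> < r2 \<Longrightarrow> G2 (of_real y) = of_real (g y)" using ra_complex[OF g] by blast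
  show ?thesis
  proof (rule complex_ra[of "min r1 r2" "\<lambda>z. G1 z * G2 z"])
    show "0 < min r1 r2" using r1 r2 by simp
    show "(\<lambda>z. G1 z * G2 z) holomorphic_on ball (complex_of_real p) (min r1 r2)"
      by (intro holomorphic_intros holomorphic_on_subset[OF h1] holomorphic_on_subset[OF h2]) auto
    fix y assume "\<bar>y - p\<bar> < min r1 r2"
    then show "Re (G1 (of_real y) * G2 (of_real y)) = f y * g y" using e1 e2 by simp
  qed
qed

lemma ra_inverse:
  assumes g: "real_analytic_at g p" and gp: "g p \<noteq> 0"
  shows "real_analytic_at (\<lambda>x. inverse (g x)) p"
proof -
  obtain r1 G1 where r1: "r1 > 0" and h1: "G1 holomorphic_on ball (complex_of_real p) r1"
    and e1: "\<And>y. \<bar>y - p\<bar> < r1 \<Longrightarrow> G1 (of_real y) = of_real (g y)" using ra_complex[OF g] by blast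
  have "continuous_on (ball (of_real p) r1) G1" by (rule holomorphic_on_imp_continuous_on[OF h1])
  then have "isCont G1 (of_real p)" by (rule continuous_on_interior) (use r1 in simp)
  moreover have "G1 (of_real p) \<noteq> 0" using e1[of p] r1 gp by simp
  ultimately obtain e where e: "e > 0" "\<And>z. dist (of_real p) z < e \<Longrightarrow> G1 z \<noteq> 0"
    using continuous_at_avoid by blast
  show ?thesis
  proof (rule complex_ra[of "min r1 e" "\<lambda>z. inverse (G1 z)"])
    show "0 < min r1 e" using r1 e by simp
    show "(\<lambda>z. inverse (G1 z)) holomorphic_on ball (complex_of_real p) (min r1 e)"
      by (intro holomorphic_intros holomorphic_on_subset[OF h1]) (auto intro!: e(2))
    fix y assume "\<bar>y - p\<bar> < min r1 e"
    then show "Re (inverse (G1 (of_real y))) = inverse (g y)" using e1 by (simp flip: of_real_inverse)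
  qed
qed

lemma ra_const: "real_analytic_at (\<lambda>x. k) p"
  by (rule complex_ra[of 1 "\<lambda>z. of_real k"]) auto

lemma ra_id: "real_analytic_at (\<lambda>x. x) p"
  by (rule complex_ra[of 1 "\<lambda>z. z"]) auto

lemma ra_minus: "real_analytic_at f p \<Longrightarrow> real_analytic_at (\<lambda>x. - f x) p"
  using ra_mult[OF ra_const[of "-1"]] by simp

lemma ra_diff: "real_analytic_at f p \<Longrightarrow> real_analytic_at g p \<Longrightarrow> real_analytic_at (\<lambda>x. f x - g x) p"
  using ra_add[OF _ ra_minus] by simp

lemma ra_divide: "real_analytic_at f p \<Longrightarrow> real_analytic_at g p \<Longrightarrow> g p \<noteq> 0 \<Longrightarrow>
   real_analytic_at (\<lambda>x. f x / g x) p"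
  using ra_mult[OF _ ra_inverse] by (simp add: divide_inverse)

lemma ra_sum: "finite A \<Longrightarrow> (\<And>i. i \<in> A \<Longrightarrow> real_analytic_at (F i) p) \<Longrightarrow>
   real_analytic_at (\<lambda>x. \<Sum>i\<in>A. F i x) p"
  by (induction A rule: finite_induct) (auto intro: ra_const ra_add)

lemma ra_prod: "finite A \<Longrightarrow> (\<And>i. i \<in> A \<Longrightarrow> real_analytic_at (F i) p) \<Longrightarrow>
   real_analytic_at (\<lambda>x. \<Prod>i\<in>A. F i x) p"
  by (induction A rule: finite_induct) (auto intro: ra_const ra_mult)

lemma ra_power: "real_analytic_at f p \<Longrightarrow> real_analytic_at (\<lambda>x. f x ^ n) p"
  by (induction n) (auto intro: ra_const ra_mult)

lemma ra_trig: "real_analytic_at (\<lambda>x. sin (x - q) + k * (1 - cos (x - q))) p"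
proof (rule complex_ra[of 1 "\<lambda>z. sin (z - of_real q) + of_real k * (1 - cos (z - of_real q))"])
  show "(\<lambda>z. sin (z - of_real q) + of_real k * (1 - cos (z - of_real q))) holomorphic_on ball (of_real p) 1"
    by (intro holomorphic_intros)
  fix y
  have e: "complex_of_real y - of_real q = of_real (y - q)" by simp
  have "sin (complex_of_real y - of_real q) = of_real (sin (y - q))"
    unfolding e by (rule sin_of_real)
  moreover have "cos (complex_of_real y - of_real q) = of_real (cos (y - q))"
    unfolding e by (rule cos_of_real)
  ultimately show "Re (sin (complex_of_real y - of_real q) + of_real k * (1 - cos (complex_of_real y - of_real q))) =
     sin (y - q) + k * (1 - cos (y - q))" by simp
qed simp

lemma ra_limpt_zero:
  assumes fa: "real_analytic_at f x" and lp: "x islimpt {y. f y = 0}"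
  shows "eventually (\<lambda>y. f y = 0) (nhds x)"
proof -
  obtain r G where r: "r > 0" and hol: "G holomorphic_on ball (complex_of_real x) r"
    and eq: "\<And>y. \<bar>y - x\<bar> < r \<Longrightarrow> G (of_real y) = of_real (f y)" using ra_complex[OF fa] by blast
  define U where "U = complex_of_real ` {y. \<bar>y - x\<bar> < r \<and> f y = 0}"
  have US: "U \<subseteq> ball (of_real x) r" unfolding U_def by (auto simp: dist_real_def abs_minus_commute)
  have "of_real x islimpt U"
    unfolding islimpt_approachable
  proof (intro allI impI)
    fix e :: real assume "e > 0"
    have "min e r > 0" using \<open>e > 0\<close> r by simp
    then obtain y where y: "y \<in> {y. f y = 0}" "y \<noteq> x" "dist y x < min e r"
      using lp unfolding islimpt_approachable by blast
    have "\<bar>y - x\<bar> < r" using y(3) by (simp add: dist_real_def)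
    then have "complex_of_real y \<in> U" unfolding U_def using y(1) by blast
    moreover have "complex_of_real y \<noteq> of_real x" using y(2) by simp
    moreover have "dist (complex_of_real y) (of_real x) < e" using y(3) by simp
    ultimately show "\<exists>u\<in>U. u \<noteq> of_real x \<and> dist u (of_real x) < e" by blast
  qed
  have G0: "G w = 0" if "w \<in> ball (of_real x) r" for w
  proof (rule analytic_continuation[OF hol open_ball connected_ball US _ \<open>of_real x islimpt U\<close> _ that])
    show "complex_of_real x \<in> ball (complex_of_real x) r" using r by simp
    fix z assume "z \<in> U"
    then obtain y where "z = of_real y" "\<bar>y - x\<bar> < r" "f y = 0" unfolding U_def by blast
    then show "G z = 0" using eq by simp
  qed
  show ?thesis unfolding eventually_nhds_metric
  proof (intro exI conjI allI impI)
    show "r > 0" by fact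
    fix y assume "dist y x < r"
    then have "\<bar>y - x\<bar> < r" by (simp add: dist_real_def)
    then have "of_real (f y) = G (of_real y)" using eq by simp
    also have "\<dots> = 0" using G0 \<open>\<bar>y - x\<bar> < r\<close> by (simp add: dist_real_def abs_minus_commute)
    finally show "f y = 0" by simp
  qed
qed

lemma ra_global_zero:
  assumes fa: "\<And>x. real_analytic_at f x" and lp: "x0 islimpt {y. f y = 0}"
  shows "f = (\<lambda>x. 0)"
proof -
  define S where "S = {x. eventually (\<lambda>y. f y = 0) (nhds x)}"
  have SZ: "S \<subseteq> {y. f y = 0}" unfolding S_def using eventually_nhds_x_imp_x by blast
  have "open S"
  proof (rule open_subopen[THEN iffD2], intro ballI)
    fix x assume "x \<in> S"
    then have "eventually (\<lambda>y. f y = 0) (nhds x)" unfolding S_def by (rule CollectD)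
    then have "\<exists>T. open T \<and> x \<in> T \<and> (\<forall>y\<in>T. f y = 0)" by (rule eventually_nhds[THEN iffD1])
    then obtain T where T: "open T" "x \<in> T" "\<forall>y\<in>T. f y = 0" by blast
    have "T \<subseteq> S"
    proof
      fix z assume "z \<in> T"
      then have "eventually (\<lambda>y. f y = 0) (nhds z)" using T by (intro eventually_nhds[THEN iffD2]) blast
      then show "z \<in> S" unfolding S_def by (rule CollectI)
    qed
    then show "\<exists>T. open T \<and> x \<in> T \<and> T \<subseteq> S" using T by blast
  qed
  moreover have "closed S"
    unfolding closed_limpt
  proof (intro allI impI)
    fix x assume "x islimpt S"
    then have "x islimpt {y. f y = 0}" using SZ islimpt_subset by blast
    then have "eventually (\<lambda>y. f y = 0) (nhds x)" by (rule ra_limpt_zero[OF fa])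
    then show "x \<in> S" unfolding S_def by (rule CollectI)
  qed
  moreover have "x0 \<in> S" unfolding S_def using ra_limpt_zero[OF fa lp] by (rule CollectI)
  ultimately have "S = {} \<or> S = UNIV" using clopen[of S] by blast
  with \<open>x0 \<in> S\<close> have "S = UNIV" by blast
  then show ?thesis using SZ by auto
qed

lemma ra_nbhd_limpt: "eventually P (nhds (x::real)) \<Longrightarrow> x islimpt {y. P y}"
  unfolding eventually_nhds_metric islimpt_approachable
proof (intro allI impI)
  fix e :: real assume "\<exists>d>0. \<forall>y. dist y x < d \<longrightarrow> P y" "e > 0"
  then obtain d where d: "d > 0" "\<And>y. dist y x < d \<Longrightarrow> P y" by blast
  define y where "y = x + min d e / 2"
  have "dist y x < d" "dist y x < e" "y \<noteq> x" using d \<open>e > 0\<close> by (auto simp: y_def dist_real_def)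
  then show "\<exists>y\<in>{y. P y}. y \<noteq> x \<and> dist y x < e" using d by blast
qed

lemma ra_ord_exists:
  assumes fa: "\<And>x. real_analytic_at f x" and nz: "f \<noteq> (\<lambda>x. 0)"
  shows "\<exists>n. (deriv ^^ n) f p \<noteq> 0"
proof (rule ccontr)
  assume "\<not> ?thesis"
  then have D: "\<And>n. (deriv ^^ n) f p = 0" by blast
  obtain r c where r: "r > 0" and s: "\<And>y. \<bar>y - p\<bar> < r \<Longrightarrow> (\<lambda>n. c n * (y - p) ^ n) sums f y"
    using fa[of p] unfolding real_analytic_at_def by blast
  have "c n = 0" for n using ra_derivs_coeff[OF r s, of n] D[of n] by simp
  then have "f y = 0" if "\<bar>y - p\<bar> < r" for y using s[OF that] by (simp add: sums_iff)
  then have "eventually (\<lambda>y. f y = 0) (nhds p)" unfolding eventually_nhds_metric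
    using r by (auto simp: dist_real_def)
  then have "p islimpt {y. f y = 0}" by (rule ra_nbhd_limpt)
  then show False using ra_global_zero[OF fa] nz by blast
qed

lemma ra_finite_zeros:
  assumes fa: "\<And>x. real_analytic_at f x" and nz: "f \<noteq> (\<lambda>x. 0)"
  shows "finite {x \<in> S1. f x = 0}"
proof (rule ccontr)
  assume inf: "infinite {x \<in> S1. f x = 0}"
  have "{x \<in> S1. f x = 0} \<subseteq> {0..2*pi}" unfolding S1_def by auto
  then have "bounded {x \<in> S1. f x = 0}" using bounded_closed_interval bounded_subset by blast
  then obtain x where "x islimpt {x \<in> S1. f x = 0}"
    using bounded_infinite_imp_islimpt[OF order_refl _ inf] by blast
  then have "x islimpt {y. f y = 0}" using islimpt_subset by (metis (mono_tags, lifting) mem_Collect_eq subsetI)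
  then show False using ra_global_zero[OF fa] nz by blast
qed

lemma ra_factor:
  assumes fa: "real_analytic_at f p" and z: "\<And>j. j < m \<Longrightarrow> (deriv ^^ j) f p = 0"
  shows "\<exists>F. real_analytic_at F p \<and> F p = (deriv ^^ m) f p / fact m \<and>
             eventually (\<lambda>y. f y = (y - p) ^ m * F y) (nhds p)"
proof -
  obtain r c where r: "r > 0" and s: "\<And>y. \<bar>y - p\<bar> < r \<Longrightarrow> (\<lambda>n. c n * (y - p) ^ n) sums f y"
    using fa unfolding real_analytic_at_def by blast
  have c0: "c j = 0" if "j < m" for j using ra_derivs_coeff[OF r s, of j] z[OF that] by simp
  have cm: "c m = (deriv ^^ m) f p / fact m" using ra_derivs_coeff[OF r s, of m] by simp
  define F where "F y = (\<Sum>k. c (k + m) * (y - p) ^ k)" for y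
  have SF: "(\<lambda>k. c (k + m) * (y - p) ^ k) sums F y \<and> f y = (y - p) ^ m * F y"
    if y: "\<bar>y - p\<bar> < r" for y
  proof (cases "y = p")
    case True
    have fp: "c 0 = f p" using s[of p] r by simp
    have "(\<lambda>k. c (k + m) * (y - p) ^ k) sums c m" using True powser_sums_zero[of "\<lambda>k. c (k+m)"] by simp
    moreover have "F y = c m" using calculation by (simp add: F_def sums_iff)
    moreover have "f y = (y - p) ^ m * c m"
    proof (cases "m = 0")
      case True then show ?thesis using fp \<open>y = p\<close> by simp
    next
      case False then show ?thesis using fp c0[of 0] \<open>y = p\<close> by simp
    qed
    ultimately show ?thesis by simp
  next
    case False
    have "(\<lambda>n. c n * (y - p) ^ n) sums f y" by (rule s[OF y])
    then have sh: "(\<lambda>k. c (k + m) * (y - p) ^ (k + m)) sums f y"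
      using sums_iff_shift[of "\<lambda>n. c n * (y - p) ^ n" m "f y"] c0 by simp
    have "(\<lambda>k. inverse ((y - p)^m) * (c (k + m) * (y - p) ^ (k + m))) sums (inverse ((y-p)^m) * f y)"
      by (rule sums_mult[OF sh])
    moreover have "inverse ((y - p)^m) * (c (k + m) * (y - p) ^ (k + m)) = c (k + m) * (y - p) ^ k" for k
      using False by (simp add: power_add)
    ultimately have S: "(\<lambda>k. c (k + m) * (y - p) ^ k) sums (inverse ((y-p)^m) * f y)" by simp
    then have "F y = inverse ((y-p)^m) * f y" by (simp add: F_def sums_iff)
    then have "f y = (y - p) ^ m * F y" using False by simp
    then show ?thesis using S \<open>F y = inverse ((y-p)^m) * f y\<close> by simp
  qed
  have "real_analytic_at F p" unfolding real_analytic_at_def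
    by (rule exI[of _ r], intro conjI exI[of _ "\<lambda>k. c (k + m)"] allI impI r) (use SF in blast)
  moreover have "F p = c m"
  proof -
    have "(\<lambda>k. c (k + m) * (p - p) ^ k) sums F p" using SF[of p] r by simp
    then show ?thesis by simp
  qed
  moreover have "eventually (\<lambda>y. f y = (y - p) ^ m * F y) (nhds p)"
    unfolding eventually_nhds_metric
    by (rule exI[of _ r], intro conjI allI impI r) (use SF in \<open>auto simp: dist_real_def\<close>)
  ultimately show ?thesis using cm by auto
qed

lemma ra_unfactor:
  assumes Fa: "real_analytic_at F p" and ev: "eventually (\<lambda>y. f y = (y - p) ^ m * F y) (nhds p)"
  shows "(\<forall>j<m. (deriv ^^ j) f p = 0) \<and> (deriv ^^ m) f p = fact m * F p"
proof -
  obtain r1 d where r1: "r1 > 0" and s: "\<And>y. \<bar>y - p\<bar> < r1 \<Longrightarrow> (\<lambda>n. d n * (y - p) ^ n) sums F y"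
    using Fa unfolding real_analytic_at_def by blast
  obtain r2 where r2: "r2 > 0" and e2: "\<And>y. dist y p < r2 \<Longrightarrow> f y = (y - p) ^ m * F y"
    using ev unfolding eventually_nhds_metric by blast
  define c where "c n = (if n < m then 0 else d (n - m))" for n
  define r where "r = min r1 r2"
  have r: "r > 0" using r1 r2 by (simp add: r_def)
  have s': "(\<lambda>n. c n * (y - p) ^ n) sums f y" if y: "\<bar>y - p\<bar> < r" for y
  proof -
    have "(\<lambda>k. (y - p) ^ m * (d k * (y - p) ^ k)) sums ((y - p) ^ m * F y)"
      by (rule sums_mult[OF s]) (use y in \<open>simp add: r_def\<close>)
    moreover have "(y - p) ^ m * (d k * (y - p) ^ k) = c (k + m) * (y - p) ^ (k + m)" for k
      by (simp add: c_def power_add)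
    ultimately have "(\<lambda>k. c (k + m) * (y - p) ^ (k + m)) sums ((y - p) ^ m * F y)" by simp
    then have "(\<lambda>n. c n * (y - p) ^ n) sums ((y - p) ^ m * F y + (\<Sum>i<m. c i * (y - p) ^ i))"
      by (rule sums_iff_shift[THEN iffD1])
    moreover have "(\<Sum>i<m. c i * (y - p) ^ i) = 0" by (simp add: c_def)
    moreover have "f y = (y - p) ^ m * F y" using e2 y by (simp add: r_def dist_real_def)
    ultimately show ?thesis by simp
  qed
  have D: "(deriv ^^ j) f p = fact j * c j" for j by (rule ra_derivs_coeff[OF r s'])
  have "d 0 = F p" using s[of p] r1 by simp
  then show ?thesis using D by (simp add: c_def)
qed

lemma deriv_periodic:
  assumes "\<And>x. f (x + T) = f x"
  shows "deriv f (x + T) = deriv f (x :: real)"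
proof -
  have "(\<lambda>x. f (x + T)) = f" using assms by (simp add: fun_eq_iff)
  then have "(\<lambda>D. (f has_field_derivative D) (at (x + T))) = (\<lambda>D. (f has_field_derivative D) (at x))"
    using DERIV_shift[of f _ x T] by (simp add: fun_eq_iff)
  then show ?thesis unfolding deriv_def by simp
qed

lemma derivs_periodic:
  assumes "\<And>x. f (x + T) = f x"
  shows "(deriv ^^ n) f (x + T) = (deriv ^^ n) f (x :: real)"
proof -
  have "\<forall>x. (deriv ^^ n) f (x + T) = (deriv ^^ n) f x"
  proof (induction n)
    case 0 then show ?case using assms by simp
  next
    case (Suc n) then show ?case using deriv_periodic[of "(deriv ^^ n) f" T] by simp
  qed
  then show ?thesis by blast
qed

lemma periodic_int:
  assumes "\<And>x. f (x + T) = f x"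
  shows "f (x + of_int k * T) = f (x :: real)"
proof (induction k rule: int_induct[where k = 0])
  case base then show ?case by simp
next
  case (step1 i)
  have "f (x + of_int (i + 1) * T) = f ((x + of_int i * T) + T)" by (simp add: algebra_simps)
  then show ?case using assms step1 by simp
next
  case (step2 i)
  have "f (x + of_int i * T) = f ((x + of_int (i - 1) * T) + T)" by (simp add: algebra_simps)
  then show ?case using assms step2 by simp
qed

definition red :: "real \<Rightarrow> real" where
  "red x = x - 2 * pi * of_int \<lfloor>x / (2 * pi)\<rfloor>"

lemma red_S1: "red x \<in> S1"
proof -
  have p: "2 * pi > 0" by simp
  have a: "of_int \<lfloor>x / (2 * pi)\<rfloor> \<le> x / (2 * pi)" by (rule of_int_floor_le)
  have b: "x / (2 * pi) < of_int \<lfloor>x / (2 * pi)\<rfloor> + 1" by (rule real_of_int_floor_add_one_gt)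
  have "of_int \<lfloor>x / (2 * pi)\<rfloor> * (2 * pi) \<le> x" using mult_right_mono[OF a, of "2*pi"] by simp
  moreover have "x < (of_int \<lfloor>x / (2 * pi)\<rfloor> + 1) * (2 * pi)" using mult_strict_right_mono[OF b, of "2*pi"] by simp
  ultimately show ?thesis unfolding S1_def red_def by (auto simp: algebra_simps)
qed

lemma periodic_red:
  assumes "\<And>x. f (x + 2 * pi) = f x"
  shows "f x = f (red x)"
proof -
  have "x = red x + of_int \<lfloor>x / (2 * pi)\<rfloor> * (2 * pi)" by (simp add: red_def)
  then have "f x = f (red x + of_int \<lfloor>x / (2 * pi)\<rfloor> * (2 * pi))" by simp
  also have "\<dots> = f (red x)" by (rule periodic_int[of f "2*pi", OF assms])
  finally show ?thesis .
qed

lemma red_S1_id: "x \<in> S1 \<Longrightarrow> red x = x"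
proof -
  assume "x \<in> S1"
  then have "0 \<le> x / (2 * pi)" "x / (2 * pi) < 1" unfolding S1_def by auto
  then have "\<lfloor>x / (2 * pi)\<rfloor> = 0" by (simp add: floor_eq_iff)
  then show ?thesis by (simp add: red_def)
qed

lemma Can_ring_simps [simp]:
  "carrier Can_ring = Can" "x \<otimes>\<^bsub>Can_ring\<^esub> y = (\<lambda>t. x t * y t)" "\<one>\<^bsub>Can_ring\<^esub> = (\<lambda>t. 1)"
  "\<zero>\<^bsub>Can_ring\<^esub> = (\<lambda>t. 0)" "x \<oplus>\<^bsub>Can_ring\<^esub> y = (\<lambda>t. x t + y t)"
  by (simp_all add: Can_ring_def)

lemma Can_per: "f \<in> Can \<Longrightarrow> f (x + 2 * pi) = f x"
  by (simp add: Can_def)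

lemma Can_ra: "f \<in> Can \<Longrightarrow> real_analytic_at f x"
  by (simp add: Can_def)

lemma CanI: "(\<And>x. f (x + 2 * pi) = f x) \<Longrightarrow> (\<And>x. real_analytic_at f x) \<Longrightarrow> f \<in> Can"
  by (simp add: Can_def) blast

lemma Can_add: "f \<in> Can \<Longrightarrow> g \<in> Can \<Longrightarrow> (\<lambda>x. f x + g x) \<in> Can"
  by (intro CanI ra_add) (auto simp: Can_per Can_ra)

lemma Can_mult: "f \<in> Can \<Longrightarrow> g \<in> Can \<Longrightarrow> (\<lambda>x. f x * g x) \<in> Can"
  by (intro CanI ra_mult) (auto simp: Can_per Can_ra)

lemma Can_minus: "f \<in> Can \<Longrightarrow> (\<lambda>x. - f x) \<in> Can"
  by (intro CanI ra_minus) (auto simp: Can_per Can_ra)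

lemma Can_diff: "f \<in> Can \<Longrightarrow> g \<in> Can \<Longrightarrow> (\<lambda>x. f x - g x) \<in> Can"
  by (intro CanI ra_diff) (auto simp: Can_per Can_ra)

lemma Can_const: "(\<lambda>x. k) \<in> Can"
  by (intro CanI ra_const) auto

lemma Can_sum: "finite A \<Longrightarrow> (\<And>i. i \<in> A \<Longrightarrow> F i \<in> Can) \<Longrightarrow> (\<lambda>x. \<Sum>i\<in>A. F i x) \<in> Can"
  by (induction A rule: finite_induct) (auto intro: Can_const Can_add)

lemma Can_prod: "finite A \<Longrightarrow> (\<And>i. i \<in> A \<Longrightarrow> F i \<in> Can) \<Longrightarrow> (\<lambda>x. \<Prod>i\<in>A. F i x) \<in> Can"
  by (induction A rule: finite_induct) (auto intro: Can_const Can_mult)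

lemma Can_power: "f \<in> Can \<Longrightarrow> (\<lambda>x. f x ^ n) \<in> Can"
  by (induction n) (auto intro: Can_const Can_mult)

lemma cring_Can: "cring Can_ring"
proof (rule cringI)
  show "abelian_group Can_ring"
  proof (rule abelian_groupI, goal_cases)
    case (1 x y) then show ?case by (simp add: Can_add)
  next
    case 2 then show ?case by (simp add: Can_const)
  next
    case (3 x y z) then show ?case by (simp add: fun_eq_iff algebra_simps)
  next
    case (4 x y) then show ?case by (simp add: fun_eq_iff algebra_simps)
  next
    case (5 x) then show ?case by simp
  next
    case (6 x)
    then have "(\<lambda>t. - x t) \<in> carrier Can_ring" by (simp add: Can_minus)
    moreover have "(\<lambda>t. - x t) \<oplus>\<^bsub>Can_ring\<^esub> x = \<zero>\<^bsub>Can_ring\<^esub>" by simp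
    ultimately show ?case by blast
  qed
  show "comm_monoid Can_ring"
  proof (rule comm_monoidI, goal_cases)
    case (1 x y) then show ?case by (simp add: Can_mult)
  next
    case 2 then show ?case by (simp add: Can_const)
  next
    case (3 x y z) then show ?case by (simp add: fun_eq_iff algebra_simps)
  next
    case (4 x) then show ?case by simp
  next
    case (5 x y) then show ?case by (simp add: fun_eq_iff algebra_simps)
  qed
  fix x y z
  show "(x \<oplus>\<^bsub>Can_ring\<^esub> y) \<otimes>\<^bsub>Can_ring\<^esub> z = x \<otimes>\<^bsub>Can_ring\<^esub> z \<oplus>\<^bsub>Can_ring\<^esub> y \<otimes>\<^bsub>Can_ring\<^esub> z"
    by (simp add: fun_eq_iff algebra_simps)
qed

interpretation R: cring Can_ring by (rule cring_Can)

lemma Can_a_inv: "f \<in> Can \<Longrightarrow> \<ominus>\<^bsub>Can_ring\<^esub> f = (\<lambda>x. - f x)"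
  by (rule R.minus_equality) (auto simp: Can_minus)

lemma ideal_sub: "ideal I Can_ring \<Longrightarrow> I \<subseteq> Can"
  using additive_subgroup.a_subset[OF ideal.axioms(1)] by fastforce

lemma ideal_zero: "ideal I Can_ring \<Longrightarrow> (\<lambda>x. 0) \<in> I"
  using additive_subgroup.zero_closed[OF ideal.axioms(1)] by fastforce

lemma ideal_add: "ideal I Can_ring \<Longrightarrow> f \<in> I \<Longrightarrow> g \<in> I \<Longrightarrow> (\<lambda>x. f x + g x) \<in> I"
  using additive_subgroup.a_closed[OF ideal.axioms(1)] by fastforce

lemma ideal_lmult: "ideal I Can_ring \<Longrightarrow> f \<in> Can \<Longrightarrow> g \<in> I \<Longrightarrow> (\<lambda>x. f x * g x) \<in> I"
  using ideal.I_l_closed by fastforce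

lemma ideal_sum:
  assumes I: "ideal I Can_ring" and fin: "finite G"
  shows "G \<subseteq> I \<Longrightarrow> (\<And>g. g \<in> G \<Longrightarrow> h g \<in> Can) \<Longrightarrow> (\<lambda>x. \<Sum>g\<in>G. h g x * g x) \<in> I"
  using fin
proof (induction G rule: finite_induct)
  case empty then show ?case using ideal_zero[OF I] by simp
next
  case (insert g G)
  have "(\<lambda>x. h g x * g x) \<in> I" using insert by (intro ideal_lmult[OF I]) auto
  moreover have "(\<lambda>x. \<Sum>g\<in>G. h g x * g x) \<in> I" using insert by auto
  ultimately have "(\<lambda>x. h g x * g x + (\<Sum>g\<in>G. h g x * g x)) \<in> I" by (rule ideal_add[OF I])
  then show ?case using insert by simp
qed

lemma ideal_m: "ideal (max_ideal_at p) Can_ring"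
proof (rule idealI)
  show "ring Can_ring" by (rule R.ring_axioms)
  show "subgroup (max_ideal_at p) (add_monoid Can_ring)"
  proof (rule R.add.subgroupI)
    show "max_ideal_at p \<subseteq> carrier Can_ring" by (auto simp: max_ideal_at_def)
    show "max_ideal_at p \<noteq> {}" using Can_const by (auto simp: max_ideal_at_def)
    fix a assume "a \<in> max_ideal_at p"
    then show "\<ominus>\<^bsub>Can_ring\<^esub> a \<in> max_ideal_at p" by (auto simp: max_ideal_at_def Can_a_inv Can_minus)
  next
    fix a b assume "a \<in> max_ideal_at p" "b \<in> max_ideal_at p"
    then show "a \<oplus>\<^bsub>Can_ring\<^esub> b \<in> max_ideal_at p" by (auto simp: max_ideal_at_def Can_add)
  qed
  fix a x assume "a \<in> max_ideal_at p" "x \<in> carrier Can_ring"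
  then show "x \<otimes>\<^bsub>Can_ring\<^esub> a \<in> max_ideal_at p" "a \<otimes>\<^bsub>Can_ring\<^esub> x \<in> max_ideal_at p"
    by (auto simp: max_ideal_at_def Can_mult)
qed

definition ordge :: "(real \<Rightarrow> real) \<Rightarrow> real \<Rightarrow> nat \<Rightarrow> bool" where
  "ordge f p m \<longleftrightarrow> (\<exists>F. real_analytic_at F p \<and> eventually (\<lambda>y. f y = (y - p) ^ m * F y) (nhds p))"

definition Jset :: "real set \<Rightarrow> (real \<Rightarrow> nat) \<Rightarrow> (real \<Rightarrow> real) set" where
  "Jset Z a = {f \<in> Can. \<forall>p\<in>Z. ordge f p (a p)}"

lemma ordge_derivs: "ordge f p m \<Longrightarrow> j < m \<Longrightarrow> (deriv ^^ j) f p = 0"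
  unfolding ordge_def using ra_unfactor by blast

lemma derivs_ordge: "real_analytic_at f p \<Longrightarrow> (\<And>j. j < m \<Longrightarrow> (deriv ^^ j) f p = 0) \<Longrightarrow> ordge f p m"
  unfolding ordge_def using ra_factor by blast

lemma ordge_add:
  assumes "ordge f p m" "ordge g p m" shows "ordge (\<lambda>x. f x + g x) p m"
proof -
  obtain F G where F: "real_analytic_at F p" "eventually (\<lambda>y. f y = (y - p) ^ m * F y) (nhds p)"
    and G: "real_analytic_at G p" "eventually (\<lambda>y. g y = (y - p) ^ m * G y) (nhds p)"
    using assms unfolding ordge_def by blast
  have "eventually (\<lambda>y. f y + g y = (y - p) ^ m * (F y + G y)) (nhds p)"
    using eventually_conj[OF F(2) G(2)] by eventually_elim (simp add: algebra_simps)
  then show ?thesis unfolding ordge_def using ra_add[OF F(1) G(1)] by blast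
qed

lemma ordge_mult:
  assumes "ordge f p m" "ordge g p k" shows "ordge (\<lambda>x. f x * g x) p (m + k)"
proof -
  obtain F G where F: "real_analytic_at F p" "eventually (\<lambda>y. f y = (y - p) ^ m * F y) (nhds p)"
    and G: "real_analytic_at G p" "eventually (\<lambda>y. g y = (y - p) ^ k * G y) (nhds p)"
    using assms unfolding ordge_def by blast
  have "eventually (\<lambda>y. f y * g y = (y - p) ^ (m + k) * (F y * G y)) (nhds p)"
    using eventually_conj[OF F(2) G(2)] by eventually_elim (simp add: algebra_simps power_add)
  then show ?thesis unfolding ordge_def using ra_mult[OF F(1) G(1)] by blast
qed

lemma ordge_0: "real_analytic_at f p \<Longrightarrow> ordge f p 0"
  unfolding ordge_def by (intro exI[of _ f]) simp

lemma ordge_zero_fun: "ordge (\<lambda>x. 0) p m"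
  unfolding ordge_def by (intro exI[of _ "\<lambda>x. 0"]) (simp add: ra_const)

lemma ordge_val: "ordge f p m \<Longrightarrow> m \<ge> 1 \<Longrightarrow> f p = 0"
  unfolding ordge_def using eventually_nhds_x_imp_x by fastforce

lemma ordge_mono:
  assumes "ordge f p m" "k \<le> m" shows "ordge f p k"
proof -
  obtain F where F: "real_analytic_at F p" "eventually (\<lambda>y. f y = (y - p) ^ m * F y) (nhds p)"
    using assms unfolding ordge_def by blast
  have "eventually (\<lambda>y. f y = (y - p) ^ k * ((y - p) ^ (m - k) * F y)) (nhds p)"
    using F(2) by eventually_elim (simp add: assms(2) mult.assoc[symmetric] power_add[symmetric])
  moreover have "real_analytic_at (\<lambda>y. (y - p) ^ (m - k) * F y) p"
    by (intro ra_mult ra_power ra_diff ra_id ra_const F(1))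
  ultimately show ?thesis unfolding ordge_def by blast
qed

lemma vo_derivs:
  assumes "f \<in> Can" "f \<noteq> (\<lambda>x. 0)"
  shows "(deriv ^^ vanishing_order f p) f p \<noteq> 0" "\<And>j. j < vanishing_order f p \<Longrightarrow> (deriv ^^ j) f p = 0"
proof -
  have ex: "\<exists>n. (deriv ^^ n) f p \<noteq> 0" using ra_ord_exists[OF Can_ra[OF assms(1)] assms(2)] .
  show "(deriv ^^ vanishing_order f p) f p \<noteq> 0" unfolding vanishing_order_def by (rule LeastI_ex[OF ex])
  fix j assume "j < vanishing_order f p"
  then show "(deriv ^^ j) f p = 0" unfolding vanishing_order_def using not_less_Least by blast
qed

lemma vo_ge: "f \<in> Can \<Longrightarrow> f \<noteq> (\<lambda>x. 0) \<Longrightarrow> ordge f p m \<Longrightarrow> m \<le> vanishing_order f p"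
  using vo_derivs(1) ordge_derivs not_le by metis

lemma vo_ordge: "f \<in> Can \<Longrightarrow> f \<noteq> (\<lambda>x. 0) \<Longrightarrow> ordge f p (vanishing_order f p)"
  by (rule derivs_ordge[OF Can_ra]) (auto dest: vo_derivs(2))

lemma vo_exact:
  assumes "real_analytic_at F p" "F p \<noteq> 0" "eventually (\<lambda>y. f y = (y - p) ^ m * F y) (nhds p)"
  shows "vanishing_order f p = m" "(deriv ^^ m) f p \<noteq> 0"
proof -
  note U = ra_unfactor[OF assms(1,3)]
  show D: "(deriv ^^ m) f p \<noteq> 0" using U assms(2) by simp
  show "vanishing_order f p = m" unfolding vanishing_order_def
  proof (rule Least_equality)
    show "(deriv ^^ m) f p \<noteq> 0" by (rule D)
    fix k assume "(deriv ^^ k) f p \<noteq> 0"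
    then show "m \<le> k" using U not_le by blast
  qed
qed

lemma derivs_zero_fun: "(deriv ^^ n) (\<lambda>x::real. 0::real) = (\<lambda>x. 0)"
  by (induction n) auto

lemma Can_div:
  assumes A: "A \<in> Can" and B: "B \<in> Can"
    and hyp: "\<And>x. B x = 0 \<Longrightarrow> \<exists>m. (\<forall>j<m. (deriv ^^ j) A x = 0) \<and> (\<forall>j<m. (deriv ^^ j) B x = 0) \<and> (deriv ^^ m) B x \<noteq> 0"
  shows "\<exists>h\<in>Can. \<forall>x. B x \<noteq> 0 \<longrightarrow> h x = A x / B x"
proof -
  define M where "M x = (LEAST m. (deriv ^^ m) B x \<noteq> 0)" for x
  define h where "h x = (if B x \<noteq> 0 then A x / B x else (deriv ^^ M x) A x / (deriv ^^ M x) B x)" for x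
  have Mx: "M x = m" if "(\<forall>j<m. (deriv ^^ j) B x = 0)" "(deriv ^^ m) B x \<noteq> 0" for x m
    unfolding M_def
  proof (rule Least_equality)
    show "(deriv ^^ m) B x \<noteq> 0" by fact
    fix k assume "(deriv ^^ k) B x \<noteq> 0" then show "m \<le> k" using that not_le by blast
  qed
  have perA: "\<And>x. A (x + 2 * pi) = A x" using Can_per[OF A] .
  have perB: "\<And>x. B (x + 2 * pi) = B x" using Can_per[OF B] .
  have "M (x + 2 * pi) = M x" for x unfolding M_def using derivs_periodic[of B "2*pi", OF perB] by simp
  then have per: "h (x + 2 * pi) = h x" for x
    unfolding h_def using derivs_periodic[of A "2*pi", OF perA] derivs_periodic[of B "2*pi", OF perB] perA perB by simp
  have ra: "real_analytic_at h x" for x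
  proof (cases "B x = 0")
    case False
    have "isCont B x" by (rule ra_isCont[OF Can_ra[OF B]])
    then obtain e where e: "e > 0" "\<And>y. dist x y < e \<Longrightarrow> B y \<noteq> 0"
      using continuous_at_avoid False by blast
    have "eventually (\<lambda>y. h y = A y / B y) (nhds x)"
      unfolding eventually_nhds_metric using e by (auto simp: h_def dist_commute)
    moreover have "real_analytic_at (\<lambda>y. A y / B y) x"
      by (rule ra_divide[OF Can_ra[OF A] Can_ra[OF B] False])
    ultimately show ?thesis using ra_local by blast
  next
    case True
    obtain m where m: "\<forall>j<m. (deriv ^^ j) A x = 0" "\<forall>j<m. (deriv ^^ j) B x = 0" "(deriv ^^ m) B x \<noteq> 0"
      using hyp[OF True] by blast
    have Mm: "M x = m" using Mx m(2,3) by blast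
    obtain FA where FA: "real_analytic_at FA x" "FA x = (deriv ^^ m) A x / fact m"
      "eventually (\<lambda>y. A y = (y - x) ^ m * FA y) (nhds x)"
      using ra_factor[OF Can_ra[OF A], of m] m(1) by blast
    obtain FB where FB: "real_analytic_at FB x" "FB x = (deriv ^^ m) B x / fact m"
      "eventually (\<lambda>y. B y = (y - x) ^ m * FB y) (nhds x)"
      using ra_factor[OF Can_ra[OF B], of m] m(2) by blast
    have FBx: "FB x \<noteq> 0" using FB(2) m(3) by simp
    have "isCont FB x" by (rule ra_isCont[OF FB(1)])
    then obtain e where e: "e > 0" "\<And>y. dist x y < e \<Longrightarrow> FB y \<noteq> 0"
      using continuous_at_avoid FBx by blast
    have ev: "eventually (\<lambda>y. FB y \<noteq> 0) (nhds x)"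
      unfolding eventually_nhds_metric using e by (auto simp: dist_commute)
    have "eventually (\<lambda>y. h y = FA y / FB y) (nhds x)"
      using FA(3) FB(3) ev
    proof eventually_elim
      case (elim y)
      show ?case
      proof (cases "y = x")
        case True
        have "h y = (deriv ^^ m) A x / (deriv ^^ m) B x" using True \<open>B x = 0\<close> Mm by (simp add: h_def)
        also have "\<dots> = (fact m * FA x) / (fact m * FB x)" using FA(2) FB(2) by simp
        also have "\<dots> = FA x / FB x" by simp
        finally show ?thesis using True by simp
      next
        case False
        then have "B y \<noteq> 0" using elim by simp
        then have "h y = A y / B y" by (simp add: h_def)
        also have "\<dots> = FA y / FB y" using elim False by simp
        finally show ?thesis .
      qed
    qed
    moreover have "real_analytic_at (\<lambda>y. FA y / FB y) x" by (rule ra_divide[OF FA(1) FB(1) FBx])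
    ultimately show ?thesis using ra_local by blast
  qed
  have "h \<in> Can" by (rule CanI[OF per ra])
  moreover have "\<forall>x. B x \<noteq> 0 \<longrightarrow> h x = A x / B x" by (simp add: h_def)
  ultimately show ?thesis by blast
qed

lemma GEN_sub:
  assumes I: "ideal I Can_ring"
  shows "I \<subseteq> Jset {p \<in> S1. \<forall>f\<in>I. f p = 0} (\<lambda>p. LEAST k. \<exists>f \<in> I. f \<noteq> (\<lambda>x. 0) \<and> vanishing_order f p = k)"
    (is "_ \<subseteq> Jset ?Z ?a")
proof
  fix f assume f: "f \<in> I"
  have fC: "f \<in> Can" using ideal_sub[OF I] f by blast
  have "ordge f p (?a p)" for p
  proof (cases "f = (\<lambda>x. 0)")
    case True then show ?thesis using ordge_zero_fun by simp
  next
    case False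
    have "?a p \<le> vanishing_order f p" by (rule Least_le) (use f False in blast)
    then show ?thesis using ordge_mono[OF vo_ordge[OF fC False]] by blast
  qed
  then show "f \<in> Jset ?Z ?a" using fC by (simp add: Jset_def)
qed

lemma GEN:
  assumes I: "ideal I Can_ring" and nz: "I \<noteq> {\<lambda>x. 0}"
  defines "Z \<equiv> {p \<in> S1. \<forall>f\<in>I. f p = 0}"
    and "a \<equiv> (\<lambda>p. LEAST k. \<exists>f \<in> I. f \<noteq> (\<lambda>x. 0) \<and> vanishing_order f p = k)"
  shows "I = Jset Z a"
proof
  show sub: "I \<subseteq> Jset Z a" using GEN_sub[OF I] unfolding Z_def a_def .
  show "Jset Z a \<subseteq> I"
  proof
    fix f assume fJ: "f \<in> Jset Z a"
    have fC: "f \<in> Can" using fJ by (simp add: Jset_def)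
    have fo: "\<And>p. p \<in> Z \<Longrightarrow> ordge f p (a p)" using fJ by (simp add: Jset_def)
    have IC: "I \<subseteq> Can" by (rule ideal_sub[OF I])
    obtain f0 where f0: "f0 \<in> I" "f0 \<noteq> (\<lambda>x. 0)" using nz ideal_zero[OF I] by blast
    have f0C: "f0 \<in> Can" using f0 IC by blast
    define Q where "Q = {x \<in> S1. f0 x = 0}"
    have finQ: "finite Q" unfolding Q_def by (rule ra_finite_zeros[OF Can_ra[OF f0C] f0(2)])
    have ZQ: "Z \<subseteq> Q" unfolding Z_def Q_def using f0(1) by blast
    have "\<forall>q\<in>Q-Z. \<exists>g. g \<in> I \<and> g q \<noteq> 0" unfolding Z_def Q_def by blast
    then obtain gq where gq: "\<And>q. q \<in> Q - Z \<Longrightarrow> gq q \<in> I \<and> gq q q \<noteq> 0" by metis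
    have "\<forall>p\<in>Z. \<exists>g. g \<in> I \<and> g \<noteq> (\<lambda>x. 0) \<and> vanishing_order g p = a p"
    proof
      fix p assume "p \<in> Z"
      have "\<exists>k. \<exists>g\<in>I. g \<noteq> (\<lambda>x. 0) \<and> vanishing_order g p = k" using f0 by blast
      then have "\<exists>g\<in>I. g \<noteq> (\<lambda>x. 0) \<and> vanishing_order g p = a p" unfolding a_def by (rule LeastI_ex)
      then show "\<exists>g. g \<in> I \<and> g \<noteq> (\<lambda>x. 0) \<and> vanishing_order g p = a p" by blast
    qed
    then obtain fp where fp: "\<And>p. p \<in> Z \<Longrightarrow> fp p \<in> I \<and> fp p \<noteq> (\<lambda>x. 0) \<and> vanishing_order (fp p) p = a p"
      by metis
    define G where "G = insert f0 (gq ` (Q - Z) \<union> fp ` Z)"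
    have finG: "finite G" unfolding G_def using finQ ZQ finite_subset by auto
    have GI: "G \<subseteq> I" unfolding G_def using f0 gq fp by auto
    have GC: "\<And>g. g \<in> G \<Longrightarrow> g \<in> Can" using GI IC by blast
    have GJ: "\<And>g p. g \<in> G \<Longrightarrow> p \<in> Z \<Longrightarrow> ordge g p (a p)" using GI sub by (auto simp: Jset_def)
    define v where "v x = (\<Sum>g\<in>G. g x * g x)" for x
    have vC: "v \<in> Can" unfolding v_def[abs_def] by (intro Can_sum finG Can_mult GC)
    have vper: "\<And>x. v (x + 2*pi) = v x" by (rule Can_per[OF vC])
    have tr: "(deriv ^^ j) \<phi> x = (deriv ^^ j) \<phi> (red x)" if "\<And>x. \<phi> (x + 2*pi) = \<phi> x" for \<phi> j x
      using periodic_red[of "(deriv ^^ j) \<phi>" x, OF derivs_periodic[of \<phi> "2*pi" j, OF that]] .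
    have hex: "\<exists>h\<in>Can. \<forall>x. v x \<noteq> 0 \<longrightarrow> h x = f x * g x / v x" if gG: "g \<in> G" for g
    proof (rule Can_div)
      show "(\<lambda>x. f x * g x) \<in> Can" using fC GC[OF gG] by (rule Can_mult)
      show "v \<in> Can" by (rule vC)
      fix x assume vx: "v x = 0"
      define p where "p = red x"
      have pS: "p \<in> S1" unfolding p_def by (rule red_S1)
      have vp: "v p = 0" using periodic_red[of v x, OF vper] vx p_def by simp
      have G0: "g' p = 0" if "g' \<in> G" for g'
      proof -
        have "(\<Sum>g\<in>G. g p * g p) = 0" using vp by (simp add: v_def)
        moreover have "\<And>g. g \<in> G \<Longrightarrow> 0 \<le> g p * g p" by simp
        ultimately have "\<forall>g\<in>G. g p * g p = 0" using sum_nonneg_eq_0_iff[OF finG, of "\<lambda>g. g p * g p"] by blast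
        then show ?thesis using that by simp
      qed
      have pZ: "p \<in> Z"
      proof (rule ccontr)
        assume "p \<notin> Z"
        have "p \<in> Q" unfolding Q_def using pS G0[of f0] by (simp add: G_def)
        then have "gq p \<in> G" "gq p p \<noteq> 0" using gq[of p] \<open>p \<notin> Z\<close> by (auto simp: G_def)
        then show False using G0 by blast
      qed
      define k where "k = a p"
      have oA: "ordge (\<lambda>x. f x * g x) p (k + k)"
        unfolding k_def by (rule ordge_mult[OF fo[OF pZ] GJ[OF gG pZ]])
      have "\<forall>g'\<in>G. \<exists>F. real_analytic_at F p \<and> F p = (deriv ^^ k) g' p / fact k \<and>
               eventually (\<lambda>y. g' y = (y - p) ^ k * F y) (nhds p)"
      proof
        fix g' assume g'G: "g' \<in> G"
        have "\<And>j. j < k \<Longrightarrow> (deriv ^^ j) g' p = 0" using ordge_derivs[OF GJ[OF g'G pZ]] k_def by blast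
        then show "\<exists>F. real_analytic_at F p \<and> F p = (deriv ^^ k) g' p / fact k \<and>
               eventually (\<lambda>y. g' y = (y - p) ^ k * F y) (nhds p)"
          by (rule ra_factor[OF Can_ra[OF GC[OF g'G]]])
      qed
      then obtain Phi where Phi: "\<And>g'. g' \<in> G \<Longrightarrow> real_analytic_at (Phi g') p \<and>
           Phi g' p = (deriv ^^ k) g' p / fact k \<and> eventually (\<lambda>y. g' y = (y - p) ^ k * Phi g' y) (nhds p)"
        by metis
      define K where "K y = (\<Sum>g'\<in>G. Phi g' y * Phi g' y)" for y
      have Kra: "real_analytic_at K p" unfolding K_def[abs_def]
        by (intro ra_sum finG ra_mult) (auto dest: Phi)
      have fpG: "fp p \<in> G" using pZ by (simp add: G_def)
      have fpC: "fp p \<in> Can" using GC[OF fpG] .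
      have "(deriv ^^ k) (fp p) p \<noteq> 0" using vo_derivs(1)[OF fpC, of p] fp[OF pZ] k_def by auto
      then have Phinz: "Phi (fp p) p \<noteq> 0" using Phi[OF fpG] by simp
      have Kp: "K p > 0" unfolding K_def
        by (rule sum_pos2[OF finG fpG]) (use Phinz in \<open>auto simp: zero_less_mult_iff linorder_neq_iff\<close>)
      have "eventually (\<lambda>y. \<forall>g'\<in>G. g' y = (y - p) ^ k * Phi g' y) (nhds p)"
        using Phi by (intro eventually_ball_finite finG) auto
      then have evv: "eventually (\<lambda>y. v y = (y - p) ^ (k + k) * K y) (nhds p)"
      proof eventually_elim
        case (elim y)
        have "v y = (\<Sum>g'\<in>G. ((y - p) ^ k * Phi g' y) * ((y - p) ^ k * Phi g' y))"
          unfolding v_def using elim by (intro sum.cong) auto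
        also have "\<dots> = (y - p) ^ (k + k) * K y"
          unfolding K_def by (simp add: sum_distrib_left power_add algebra_simps)
        finally show ?case .
      qed
      note U = ra_unfactor[OF Kra evv]
      have dA: "\<forall>j<k+k. (deriv ^^ j) (\<lambda>x. f x * g x) p = 0" using ordge_derivs[OF oA] by blast
      have dB: "\<forall>j<k+k. (deriv ^^ j) v p = 0" "(deriv ^^ (k+k)) v p \<noteq> 0" using U Kp by auto
      have Aper: "\<And>x. f (x + 2*pi) * g (x + 2*pi) = f x * g x"
        using Can_per[OF fC] Can_per[OF GC[OF gG]] by simp
      have trA: "(deriv ^^ j) (\<lambda>x. f x * g x) x = (deriv ^^ j) (\<lambda>x. f x * g x) p" for j
        unfolding p_def by (rule tr) (rule Aper)
      have trB: "(deriv ^^ j) v x = (deriv ^^ j) v p" for j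
        unfolding p_def by (rule tr) (rule vper)
      show "\<exists>m. (\<forall>j<m. (deriv ^^ j) (\<lambda>x. f x * g x) x = 0) \<and> (\<forall>j<m. (deriv ^^ j) v x = 0) \<and> (deriv ^^ m) v x \<noteq> 0"
        by (rule exI[of _ "k+k"]) (use dA dB trA trB in simp)
    qed
    then obtain h where h: "\<And>g. g \<in> G \<Longrightarrow> h g \<in> Can \<and> (\<forall>x. v x \<noteq> 0 \<longrightarrow> h g x = f x * g x / v x)"
      by metis
    define d where "d x = f x - (\<Sum>g\<in>G. h g x * g x)" for x
    have dra: "\<And>x. real_analytic_at d x" unfolding d_def[abs_def]
      by (intro ra_diff Can_ra[OF fC] ra_sum finG ra_mult Can_ra) (auto dest: h GC)
    have d0: "d y = 0" if "v y \<noteq> 0" for y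
    proof -
      have "(\<Sum>g\<in>G. h g y * g y) = (\<Sum>g\<in>G. f y * (g y * g y) / v y)" using h that by (intro sum.cong) auto
      also have "\<dots> = f y * v y / v y" by (simp add: v_def sum_divide_distrib sum_distrib_left)
      also have "\<dots> = f y" using that by simp
      finally show ?thesis by (simp add: d_def)
    qed
    obtain x0 where x0: "f0 x0 \<noteq> 0" using f0(2) by auto
    have "v x0 > 0" unfolding v_def by (rule sum_pos2[OF finG, of f0]) (use x0 in \<open>auto simp: G_def zero_less_mult_iff linorder_neq_iff\<close>)
    then have vx0: "v x0 \<noteq> 0" by simp
    have "isCont v x0" by (rule ra_isCont[OF Can_ra[OF vC]])
    then obtain e where e: "e > 0" "\<And>y. dist x0 y < e \<Longrightarrow> v y \<noteq> 0" using continuous_at_avoid vx0 by blast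
    have "eventually (\<lambda>y. d y = 0) (nhds x0)" unfolding eventually_nhds_metric
      using e d0 by (auto simp: dist_commute)
    then have "x0 islimpt {y. d y = 0}" by (rule ra_nbhd_limpt)
    then have "d = (\<lambda>x. 0)" by (rule ra_global_zero[OF dra])
    then have "f = (\<lambda>x. \<Sum>g\<in>G. h g x * g x)" by (auto simp: d_def fun_eq_iff)
    moreover have "(\<lambda>x. \<Sum>g\<in>G. h g x * g x) \<in> I" by (rule ideal_sum[OF I finG GI]) (use h in blast)
    ultimately show "f \<in> I" by simp
  qed
qed

abbreviation IS where "IS \<equiv> ideals_set Can_ring"

interpretation IS: comm_monoid IS by (rule R.ideals_set_is_comm_monoid)

lemma IS_simps: "carrier IS = {J. ideal J Can_ring}" "A \<otimes>\<^bsub>IS\<^esub> B = ideal_prod Can_ring A B" "\<one>\<^bsub>IS\<^esub> = Can"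
  by (simp_all add: ideals_set_def)

lemma pow_ideal: "ideal (max_ideal_at q [^]\<^bsub>IS\<^esub> (n::nat)) Can_ring"
proof -
  have "max_ideal_at q \<in> carrier IS" using ideal_m by (simp add: IS_simps)
  then have "max_ideal_at q [^]\<^bsub>IS\<^esub> n \<in> carrier IS" by (rule IS.nat_pow_closed)
  then show ?thesis by (simp add: IS_simps)
qed

lemma pow_mem: "W \<in> max_ideal_at q \<Longrightarrow> (\<lambda>x. W x ^ n) \<in> max_ideal_at q [^]\<^bsub>IS\<^esub> (n::nat)"
proof (induction n)
  case 0 then show ?case by (simp add: IS_simps Can_const)
next
  case (Suc n)
  have "(\<lambda>x. W x ^ n) \<otimes>\<^bsub>Can_ring\<^esub> W \<in> ideal_prod Can_ring (max_ideal_at q [^]\<^bsub>IS\<^esub> n) (max_ideal_at q)"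
    by (rule ideal_prod.prod) (use Suc in auto)
  moreover have "(\<lambda>x. W x ^ Suc n) = (\<lambda>x. W x ^ n) \<otimes>\<^bsub>Can_ring\<^esub> W" by (simp add: fun_eq_iff power_Suc2)
  ultimately show ?case by (simp add: IS_simps)
qed

lemma pow_sub: "max_ideal_at q [^]\<^bsub>IS\<^esub> (n::nat) \<subseteq> {f \<in> Can. ordge f q n}"
proof (induction n)
  case 0 then show ?case by (auto simp: IS_simps intro: ordge_0 Can_ra)
next
  case (Suc n)
  show ?case
  proof
    fix f assume "f \<in> max_ideal_at q [^]\<^bsub>IS\<^esub> Suc n"
    then have "f \<in> ideal_prod Can_ring (max_ideal_at q [^]\<^bsub>IS\<^esub> n) (max_ideal_at q)" by (simp add: IS_simps)
    then show "f \<in> {f \<in> Can. ordge f q (Suc n)}"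
    proof (induction f rule: ideal_prod.induct)
      case (prod i k)
      have i: "i \<in> Can" "ordge i q n" using prod(1) Suc.IH by auto
      have k: "k \<in> Can" "k q = 0" using prod(2) by (auto simp: max_ideal_at_def)
      have "ordge k q 1" by (rule derivs_ordge[OF Can_ra[OF k(1)]]) (use k in simp)
      then have "ordge (\<lambda>x. i x * k x) q (n + 1)" by (rule ordge_mult[OF i(2)])
      then show ?case using i k by (simp add: Can_mult)
    next
      case (sum s1 s2)
      then show ?case by (auto simp: Can_add ordge_add)
    qed
  qed
qed

lemma fp_carrier: "(\<lambda>p. max_ideal_at p [^]\<^bsub>IS\<^esub> (a p::nat)) \<in> A \<rightarrow> carrier IS"
  using pow_ideal by (auto simp: IS_simps)

lemma finprod_ins:
  assumes "finite F" "q \<notin> F"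
  shows "finprod IS (\<lambda>p. max_ideal_at p [^]\<^bsub>IS\<^esub> (a p::nat)) (insert q F) =
    ideal_prod Can_ring (max_ideal_at q [^]\<^bsub>IS\<^esub> a q) (finprod IS (\<lambda>p. max_ideal_at p [^]\<^bsub>IS\<^esub> (a p::nat)) F)"
proof -
  have "max_ideal_at q [^]\<^bsub>IS\<^esub> a q \<in> carrier IS" using pow_ideal by (simp add: IS_simps)
  then show ?thesis using IS.finprod_insert[OF assms fp_carrier] by (simp add: IS_simps)
qed

lemma finprod_sub:
  "finite Z' \<Longrightarrow> finprod IS (\<lambda>p. max_ideal_at p [^]\<^bsub>IS\<^esub> (a p::nat)) Z' \<subseteq> Jset Z' a"
proof (induction Z' rule: finite_induct)
  case empty then show ?case by (simp add: IS_simps Jset_def)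
next
  case (insert q F)
  show ?case
  proof
    fix f assume "f \<in> finprod IS (\<lambda>p. max_ideal_at p [^]\<^bsub>IS\<^esub> (a p::nat)) (insert q F)"
    then have "f \<in> ideal_prod Can_ring (max_ideal_at q [^]\<^bsub>IS\<^esub> a q) (finprod IS (\<lambda>p. max_ideal_at p [^]\<^bsub>IS\<^esub> (a p::nat)) F)"
      using finprod_ins[OF insert(1,2)] by simp
    then show "f \<in> Jset (insert q F) a"
    proof (induction f rule: ideal_prod.induct)
      case (prod i k)
      have i: "i \<in> Can" "ordge i q (a q)" using prod(1) pow_sub by blast+
      have k: "k \<in> Can" "\<forall>p\<in>F. ordge k p (a p)" using prod(2) insert.IH by (auto simp: Jset_def)
      have "ordge (\<lambda>x. i x * k x) q (a q)" using ordge_mult[OF i(2) ordge_0[OF Can_ra[OF k(1)]]] by simp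
      moreover have "ordge (\<lambda>x. i x * k x) p (a p)" if "p \<in> F" for p
        using ordge_mult[OF ordge_0[OF Can_ra[OF i(1)]] k(2)[rule_format, OF that]] by simp
      ultimately show ?case using i k by (auto simp: Jset_def Can_mult)
    next
      case (sum s1 s2) then show ?case by (auto simp: Jset_def Can_add ordge_add)
    qed
  qed
qed

lemma finprod_mem:
  "finite Z' \<Longrightarrow> (\<And>q. q \<in> Z' \<Longrightarrow> W q \<in> max_ideal_at q) \<Longrightarrow>
    (\<lambda>x. \<Prod>q\<in>Z'. W q x ^ a q) \<in> finprod IS (\<lambda>p. max_ideal_at p [^]\<^bsub>IS\<^esub> (a p::nat)) Z'"
proof (induction Z' rule: finite_induct)
  case empty then show ?case by (simp add: IS_simps Can_const)
next
  case (insert q F)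
  have "(\<lambda>x. W q x ^ a q) \<otimes>\<^bsub>Can_ring\<^esub> (\<lambda>x. \<Prod>q\<in>F. W q x ^ a q) \<in>
     ideal_prod Can_ring (max_ideal_at q [^]\<^bsub>IS\<^esub> a q) (finprod IS (\<lambda>p. max_ideal_at p [^]\<^bsub>IS\<^esub> (a p::nat)) F)"
    by (rule ideal_prod.prod) (use insert pow_mem in auto)
  then show ?case using finprod_ins[OF insert(1,2)] insert(1,2) by simp
qed

definition Wf :: "real \<Rightarrow> real \<Rightarrow> real \<Rightarrow> real" where
  "Wf c q x = sin (x - q) + c * (1 - cos (x - q))"

lemma Wf_Can: "Wf c q \<in> Can"
proof (rule CanI)
  fix x
  have "x + 2 * pi - q = (x - q) + 2 * pi" by simp
  then show "Wf c q (x + 2 * pi) = Wf c q x" unfolding Wf_def by (simp only: sin_periodic cos_periodic)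
next
  fix x show "real_analytic_at (Wf c q) x" unfolding Wf_def[abs_def] by (rule ra_trig)
qed

lemma Wf_m: "Wf c q \<in> max_ideal_at q"
  using Wf_Can by (simp add: max_ideal_at_def Wf_def)

lemma Wf_factor: "\<exists>F. real_analytic_at F q \<and> F q = 1 \<and> eventually (\<lambda>y. Wf c q y = (y - q) ^ 1 * F y) (nhds q)"
proof -
  have "(Wf c q has_real_derivative 1) (at q)"
    unfolding Wf_def[abs_def] by (auto intro!: derivative_eq_intros)
  then have d1: "(deriv ^^ 1) (Wf c q) q = 1" using DERIV_imp_deriv by simp
  have z: "\<And>j. j < 1 \<Longrightarrow> (deriv ^^ j) (Wf c q) q = 0" by (simp add: Wf_def)
  have "\<exists>F. real_analytic_at F q \<and> F q = (deriv ^^ 1) (Wf c q) q / fact 1 \<and>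
             eventually (\<lambda>y. Wf c q y = (y - q) ^ 1 * F y) (nhds q)"
    by (rule ra_factor[of "Wf c q" q 1, OF Can_ra[OF Wf_Can] z])
  then show ?thesis using d1 by simp
qed

lemma cos_one_S1: "t \<in> S1 \<Longrightarrow> q \<in> S1 \<Longrightarrow> t \<noteq> q \<Longrightarrow> 1 - cos (t - q) \<noteq> 0"
proof
  assume tq: "t \<in> S1" "q \<in> S1" "t \<noteq> q" and "1 - cos (t - q) = 0"
  then have "cos (t - q) = 1" by simp
  then obtain n :: int where n: "t - q = of_int n * 2 * pi" using cos_one_2pi_int by blast
  have "t - q < 2 * pi" "- (2 * pi) < t - q" using tq unfolding S1_def by auto
  then have "of_int n * (2 * pi) < 1 * (2 * pi)" "(-1) * (2 * pi) < of_int n * (2 * pi)" using n by (simp_all add: mult.assoc)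
  then have "of_int n < (1::real)" "(-1::real) < of_int n" using pi_gt_zero
    by (simp_all only: mult_less_cancel_right)
  then have "n = 0" by linarith
  then show False using n tq(3) by simp
qed

lemma Wf_nz:
  assumes "t \<in> S1" "q \<in> S1" "t \<noteq> q" "c \<noteq> - sin (t - q) / (1 - cos (t - q))"
  shows "Wf c q t \<noteq> 0"
proof
  assume "Wf c q t = 0"
  then have "c * (1 - cos (t - q)) = - sin (t - q)" unfolding Wf_def by linarith
  then have "c = - sin (t - q) / (1 - cos (t - q))" using cos_one_S1[OF assms(1-3)] by (simp add: field_simps)
  then show False using assms(4) by simp
qed

lemma new_real: "finite (B :: real set) \<Longrightarrow> \<exists>c. c \<notin> B"
  using ex_new_if_finite[OF infinite_UNIV_char_0, of B] by blast

theorem theorem1: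
  fixes I :: "(real \<Rightarrow> real) set"
  assumes "ideal I Can_ring"
    and "I \<noteq> {\<lambda>x. 0}"
    and "I \<noteq> Can"
  defines "Z \<equiv> {p \<in> S1. \<forall>f \<in> I. f p = 0}"
    and "a \<equiv> (\<lambda>p. LEAST k. \<exists>f \<in> I. f \<noteq> (\<lambda>x. 0) \<and> vanishing_order f p = k)"
  shows "finite Z \<and> Z \<noteq> {} \<and> (\<forall>p \<in> Z. a p \<ge> 1) \<and>
         I = finprod (ideals_set Can_ring)
               (\<lambda>p. max_ideal_at p [^]\<^bsub>ideals_set Can_ring\<^esub> a p) Z"
proof -
  note I = assms(1)
  have IeqJ: "I = Jset Z a" unfolding Z_def a_def by (rule GEN[OF assms(1,2)])
  obtain f0 where f0: "f0 \<in> I" "f0 \<noteq> (\<lambda>x. 0)" using assms(2) ideal_zero[OF I] by blast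
  have f0C: "f0 \<in> Can" using ideal_sub[OF I] f0 by blast
  have ZS: "Z \<subseteq> S1" unfolding Z_def by blast
  have finZ: "finite Z"
  proof (rule finite_subset)
    show "Z \<subseteq> {x \<in> S1. f0 x = 0}" unfolding Z_def using f0(1) by blast
    show "finite {x \<in> S1. f0 x = 0}" by (rule ra_finite_zeros[OF Can_ra[OF f0C] f0(2)])
  qed
  have Zne: "Z \<noteq> {}"
  proof
    assume "Z = {}"
    then have "Jset Z a = Can" by (simp add: Jset_def)
    then show False using IeqJ assms(3) by simp
  qed
  have a1: "a p \<ge> 1" if pZ: "p \<in> Z" for p
  proof (rule ccontr)
    assume "\<not> a p \<ge> 1"
    then have a0: "a p = 0" by simp
    have "\<exists>k. \<exists>g\<in>I. g \<noteq> (\<lambda>x. 0) \<and> vanishing_order g p = k" using f0 by blast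
    then have "\<exists>g\<in>I. g \<noteq> (\<lambda>x. 0) \<and> vanishing_order g p = a p" unfolding a_def by (rule LeastI_ex)
    then obtain g where g: "g \<in> I" "g \<noteq> (\<lambda>x. 0)" "vanishing_order g p = 0" using a0 by auto
    have "g \<in> Can" using ideal_sub[OF I] g by blast
    then have "(deriv ^^ 0) g p \<noteq> 0" using vo_derivs(1)[OF _ g(2), of p] g(3) by simp
    moreover have "g p = 0" using pZ g(1) unfolding Z_def by blast
    ultimately show False by simp
  qed
  define I' where "I' = finprod IS (\<lambda>p. max_ideal_at p [^]\<^bsub>IS\<^esub> a p) Z"
  have I'J: "I' \<subseteq> Jset Z a" unfolding I'_def by (rule finprod_sub[OF finZ])
  have I'ideal: "ideal I' Can_ring"
  proof -
    have "I' \<in> carrier IS" unfolding I'_def by (rule IS.finprod_closed[OF fp_carrier])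
    then show ?thesis by (simp add: IS_simps)
  qed
  have wit: "\<exists>w\<in>I'. (\<forall>t\<in>T-Z. w t \<noteq> 0) \<and> w \<noteq> (\<lambda>x. 0) \<and> (\<forall>p\<in>Z. vanishing_order w p = a p)"
    if T: "finite T" "Z \<subseteq> T" "T \<subseteq> S1" for T
  proof -
    define B where "B = (\<lambda>(t, q). - sin (t - q) / (1 - cos (t - q))) ` (T \<times> T)"
    have "finite B" unfolding B_def using T(1) by simp
    then obtain c where c: "c \<notin> B" using new_real by blast
    have Wnz: "Wf c q t \<noteq> 0" if "t \<in> T" "q \<in> T" "t \<noteq> q" for t q
    proof (rule Wf_nz)
      show "t \<in> S1" "q \<in> S1" using that T(3) by auto
      show "t \<noteq> q" by fact
      show "c \<noteq> - sin (t - q) / (1 - cos (t - q))" using c that unfolding B_def by force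
    qed
    define w where "w x = (\<Prod>q\<in>Z. Wf c q x ^ a q)" for x
    have wI: "w \<in> I'" unfolding w_def[abs_def] I'_def by (rule finprod_mem[OF finZ Wf_m])
    have wt: "w t \<noteq> 0" if "t \<in> T - Z" for t
      unfolding w_def using finZ Wnz that T(2) by (auto simp: prod_zero_iff)
    have wo: "vanishing_order w p = a p \<and> (deriv ^^ a p) w p \<noteq> 0" if pZ: "p \<in> Z" for p
    proof -
      obtain F where F: "real_analytic_at F p" "F p = 1" "eventually (\<lambda>y. Wf c p y = (y - p) ^ 1 * F y) (nhds p)"
        using Wf_factor by blast
      define Rf where "Rf y = (\<Prod>q\<in>Z-{p}. Wf c q y ^ a q)" for y
      have Rra: "real_analytic_at Rf p" unfolding Rf_def[abs_def]
        using finZ by (intro ra_prod ra_power Can_ra[OF Wf_Can]) auto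
      have Rp: "Rf p \<noteq> 0" unfolding Rf_def using finZ Wnz pZ T(2) by (auto simp: prod_zero_iff)
      have weq: "w y = Wf c p y ^ a p * Rf y" for y
        unfolding w_def Rf_def using prod.remove[OF finZ pZ, of "\<lambda>q. Wf c q y ^ a q"] by simp
      have ev: "eventually (\<lambda>y. w y = (y - p) ^ a p * (F y ^ a p * Rf y)) (nhds p)"
        using F(3) by eventually_elim (simp add: weq power_mult_distrib)
      have Kra: "real_analytic_at (\<lambda>y. F y ^ a p * Rf y) p" by (intro ra_mult ra_power F(1) Rra)
      have Kp: "F p ^ a p * Rf p \<noteq> 0" using F(2) Rp by simp
      show ?thesis using vo_exact[OF Kra Kp ev] by blast
    qed
    have wnz: "w \<noteq> (\<lambda>x. 0)"
    proof
      assume "w = (\<lambda>x. 0)"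
      obtain p where "p \<in> Z" using Zne by blast
      then have "(deriv ^^ a p) w p \<noteq> 0" using wo by blast
      then show False using \<open>w = (\<lambda>x. 0)\<close> derivs_zero_fun by simp
    qed
    show ?thesis using wI wt wnz wo by blast
  qed
  obtain w where w: "w \<in> I'" "w \<noteq> (\<lambda>x. 0)" "\<And>p. p \<in> Z \<Longrightarrow> vanishing_order w p = a p"
    using wit[OF finZ order_refl ZS] by blast
  have I'C: "I' \<subseteq> Can" by (rule ideal_sub[OF I'ideal])
  have Z'eq: "{p \<in> S1. \<forall>f\<in>I'. f p = 0} = Z"
  proof
    show "Z \<subseteq> {p \<in> S1. \<forall>f\<in>I'. f p = 0}"
    proof
      fix p assume pZ: "p \<in> Z"
      have "f p = 0" if "f \<in> I'" for f
      proof -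
        have "ordge f p (a p)" using I'J that pZ by (auto simp: Jset_def)
        then show ?thesis using a1[OF pZ] by (rule ordge_val)
      qed
      then show "p \<in> {p \<in> S1. \<forall>f\<in>I'. f p = 0}" using ZS pZ by blast
    qed
    show "{p \<in> S1. \<forall>f\<in>I'. f p = 0} \<subseteq> Z"
    proof
      fix p assume p: "p \<in> {p \<in> S1. \<forall>f\<in>I'. f p = 0}"
      show "p \<in> Z"
      proof (rule ccontr)
        assume "p \<notin> Z"
        obtain w' where "w' \<in> I'" "\<forall>t\<in>insert p Z - Z. w' t \<noteq> 0"
          using wit[of "insert p Z"] finZ ZS p by auto
        then show False using p \<open>p \<notin> Z\<close> by auto
      qed
    qed
  qed
  have a'eq: "(LEAST k. \<exists>f\<in>I'. f \<noteq> (\<lambda>x. 0) \<and> vanishing_order f p = k) = a p" if pZ: "p \<in> Z" for p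
  proof (rule Least_equality)
    show "\<exists>f\<in>I'. f \<noteq> (\<lambda>x. 0) \<and> vanishing_order f p = a p" using w pZ by blast
    fix k assume "\<exists>f\<in>I'. f \<noteq> (\<lambda>x. 0) \<and> vanishing_order f p = k"
    then obtain f where f: "f \<in> I'" "f \<noteq> (\<lambda>x. 0)" "vanishing_order f p = k" by blast
    have "ordge f p (a p)" using I'J f(1) pZ by (auto simp: Jset_def)
    then show "a p \<le> k" using vo_ge[OF _ f(2)] I'C f(1) f(3) by blast
  qed
  have I'nz: "I' \<noteq> {\<lambda>x. 0}" using w by blast
  have "I' = Jset {p \<in> S1. \<forall>f\<in>I'. f p = 0} (\<lambda>p. LEAST k. \<exists>f\<in>I'. f \<noteq> (\<lambda>x. 0) \<and> vanishing_order f p = k)"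
    by (rule GEN[OF I'ideal I'nz])
  also have "\<dots> = Jset Z a" unfolding Z'eq using a'eq by (auto simp: Jset_def)
  finally have "I' = I" using IeqJ by simp
  then show ?thesis using finZ Zne a1 unfolding I'_def by simp
qed

end
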